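(* For a fixed $x\in(0,1)$, the function $g(k)=(\cos kx+\sin kx)^{1/k}$ is decreasing on $(0,1)$. *)

theory Defs
  imports "HOL-Analysis.Analysis"
begin

end

theory Submission
  imports Defs
begin

lemma pos_cs: fixes t :: real assumes "0 \<le> t" "t \<le> 1" shows "cos t + sin t > 0"
proof -
  have "t < pi/2" using assms pi_gt3 by linarith
  hence "cos t > 0" using assms by (intro cos_gt_zero_pi) auto
  moreover have "t \<le> pi" using assms pi_gt3 by linarith
  hence "sin t \<ge> 0" using assms by (intro sin_ge_zero) auto
  ultimately show ?thesis by simp
qed

lemma phi_deriv: fixes t :: real assumes "0 \<le> t" "t \<le> 1"
  shows "DERIV (\<lambda>t. ln (cos t + sin t)) t :> (cos t - sin t) / (cos t + sin t)"
proof -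
  have p: "cos t + sin t > 0" using pos_cs[OF assms] .
  have "DERIV (\<lambda>t. cos t + sin t) t :> (- sin t + cos t)"
    by (intro DERIV_add DERIV_cos DERIV_sin)
  from DERIV_chain2[OF DERIV_ln_divide[OF p] this]
  show ?thesis by simp
qed

lemma d_dec: fixes t1 t2 :: real assumes "0 \<le> t1" "t1 < t2" "t2 \<le> 1"
  shows "(cos t2 - sin t2) / (cos t2 + sin t2) < (cos t1 - sin t1) / (cos t1 + sin t1)"
proof -
  have p1: "cos t1 + sin t1 > 0" "cos t2 + sin t2 > 0" using pos_cs assms by auto
  have "t2 - t1 < pi" using assms pi_gt3 by linarith
  hence "sin (t2 - t1) > 0" using assms by (intro sin_gt_zero) auto
  hence "(cos t2 - sin t2) * (cos t1 + sin t1) < (cos t1 - sin t1) * (cos t2 + sin t2)"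
    unfolding sin_diff by (simp add: algebra_simps)
  thus ?thesis using p1 by (simp add: divide_less_eq less_divide_eq mult.commute)
qed

lemma key: fixes a b :: real assumes "0 < a" "a < b" "b \<le> 1"
  shows "a * ln (cos b + sin b) < b * ln (cos a + sin a)"
proof -
  define \<phi> :: "real \<Rightarrow> real" where "\<phi> = (\<lambda>t. ln (cos t + sin t))"
  define d :: "real \<Rightarrow> real" where "d = (\<lambda>t::real. (cos t - sin t) / (cos t + sin t))"
  have D: "\<And>t. 0 \<le> t \<Longrightarrow> t \<le> 1 \<Longrightarrow> DERIV \<phi> t :> d t"
    unfolding \<phi>_def d_def by (rule phi_deriv)
  obtain z1 where z1: "0 < z1" "z1 < a" "\<phi> a - \<phi> 0 = (a - 0) * d z1"
    using MVT2[of 0 a \<phi> d] D assms by auto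
  obtain z2 where z2: "a < z2" "z2 < b" "\<phi> b - \<phi> a = (b - a) * d z2"
    using MVT2[of a b \<phi> d] D assms by auto
  have "d z2 < d z1" unfolding d_def using z1 z2 assms by (intro d_dec) auto
  have p0: "\<phi> 0 = 0" by (simp add: \<phi>_def)
  have e1: "\<phi> a = a * d z1" using z1(3) p0 by simp
  have e2: "\<phi> b = \<phi> a + (b - a) * d z2" using z2(3) by simp
  have "b * \<phi> a - a * \<phi> b = (b - a) * a * (d z1 - d z2)"
    unfolding e2 unfolding e1 by (simp add: algebra_simps)
  also have "\<dots> > 0" using \<open>d z2 < d z1\<close> assms by simp
  finally show ?thesis unfolding \<phi>_def by simp
qed

theorem lemma4p13:
  fixes x :: real
  assumes "0 < x" and "x < 1"
  shows "strict_antimono_on {0<..<1} (\<lambda>k::real. (cos (k * x) + sin (k * x)) powr (1 / k))"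
proof (rule monotone_onI)
  fix k1 k2 :: real assume k: "k1 \<in> {0<..<1}" "k2 \<in> {0<..<1}" "k1 < k2"
  have a: "0 < k1 * x" "k1 * x < k2 * x" "k2 * x \<le> 1"
  proof -
    show "0 < k1 * x" using k assms by simp
    show "k1 * x < k2 * x" using k assms by simp
    have "k2 * x \<le> 1 * 1" using k assms by (intro mult_mono) auto
    then show "k2 * x \<le> 1" by simp
  qed
  have pa: "cos (k1*x) + sin (k1*x) > 0" "cos (k2*x) + sin (k2*x) > 0"
    using pos_cs a by auto
  define A where "A = ln (cos (k1*x) + sin (k1*x))"
  define B where "B = ln (cos (k2*x) + sin (k2*x))"
  have K: "k1 * x * B < k2 * x * A"
    unfolding A_def B_def by (rule key[OF a])
  have "k1 * B < k2 * A"
  proof -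
    have "x * (k1 * B) < x * (k2 * A)" using K by (simp add: algebra_simps)
    thus ?thesis using assms(1) by simp
  qed
  hence "B / k2 < A / k1" using k by (simp add: divide_less_eq less_divide_eq field_simps)
  hence "exp (B * (1 / k2)) < exp (A * (1 / k1))" by simp
  thus "(cos (k2 * x) + sin (k2 * x)) powr (1 / k2) < (cos (k1 * x) + sin (k1 * x)) powr (1 / k1)"
    using pa unfolding A_def B_def powr_def by simp
qed

end
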